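(* Let $p \ge 1$, $1 \le n \le p$, let $\mathcal{F} \in \mathbb{C}^{p\times p}$ be the unitary discrete Fourier transform matrix, and for $\Omega \subset \{1,\dots,p\}$ let $P_\Omega$ be the operator keeping the entries indexed by $\Omega$. For $x \in \mathbb{C}^p\setminus\{0\}$ set $f_\Omega(x) := \|P_\Omega \mathcal{F} x\|_2^2/\|x\|_2^2$, and for a measurement pattern $\Omega$ and signal $x^\natural$ let $\hat{x}_\Omega := \mathcal{F}^H P_\Omega^T P_\Omega \mathcal{F} x^\natural$. Let $\mathbb{P}$ be a probability distribution on $\mathbb{C}^p$ with $\mathbb{P}(\{0\})=0$, let $x_1,\dots,x_m$ be i.i.d. with law $\mathbb{P}$ (training signals), and let $x^\natural \sim \mathbb{P}$ be independent of $x_1,\dots,x_m$. Let $\mathcal{A} := \{\Omega \subset \{1,\dots,p\} : |\Omega| = n\}$, let $$\varepsilon_{\mathbb{P}} := \max_{\Omega \in \mathcal{A}} \mathbb{E}_{x\sim\mathbb{P}} f_\Omega(x),$$ and let $\Omega_m$ be any maximizer over $\Omega \in \mathcal{A}$ of $\frac{1}{m}\sum_{i=1}^m f_\Omega(x_i)$. Then for every $\beta \in (0,1)$, with probability at least $1-\beta$ over $x_1,\dots,x_m$, $$\mathbb{E}_{x^\natural}\!\left[\frac{\|\hat{x}_{\Omega_m} - x^\natural\|_2^2}{\|x^\natural\|_2^2}\,\middle|\, x_1,\dots,x_m\right] \le 1 - \varepsilon_{\mathbb{P}} + \varepsilon_m, \quad\text{where } \varepsilon_m = \sqrt{\frac{2}{m}\left[\log\binom{p}{n}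 + \log\frac{2}{\beta}\right]}.$$
   Context: $\mathcal{F}^H$ is the conjugate transpose of $\mathcal{F}$ and $P_\Omega^T$ the zero-filling adjoint of $P_\Omega$; $\hat{x}_\Omega$ is the least-squares reconstruction from the sub-sampled Fourier measurements $y = P_\Omega\mathcal{F}x^\natural$. The quantity $1-\varepsilon_{\mathbb{P}}$ is the expected normalized reconstruction error attained by the optimal pattern for the (unknown) distribution $\mathbb{P}$; $\Omega_m$ is the pattern obtained by empirical maximization over the training signals. The expectation in the conclusion is over $x^\natural \sim \mathbb{P}$ with the training signals (hence $\Omega_m$) held fixed. *)

theory Defs
  imports "HOL-Probability.Probability"
begin

text \<open>Signals in C^p are represented as functions nat => complex whose relevant
  coordinates are 0,...,p-1 (0-based indexing of {1,...,p}).\<close>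

definition dft :: "nat \<Rightarrow> nat \<Rightarrow> nat \<Rightarrow> complex" where
  "dft p j k = cis (- 2 * pi * real j * real k / real p) / complex_of_real (sqrt (real p))"

definition dft_apply :: "nat \<Rightarrow> (nat \<Rightarrow> complex) \<Rightarrow> nat \<Rightarrow> complex" where
  "dft_apply p x j = (\<Sum>k<p. dft p j k * x k)"

definition dft_adj :: "nat \<Rightarrow> (nat \<Rightarrow> complex) \<Rightarrow> nat \<Rightarrow> complex" where
  "dft_adj p y k = (\<Sum>j<p. cnj (dft p j k) * y j)"

text \<open>P_Omega^T P_Omega : keep entries indexed by Omega, zero-fill the rest.\<close>
definition zero_fill :: "nat set \<Rightarrow> (nat \<Rightarrow> complex) \<Rightarrow> nat \<Rightarrow> complex" where
  "zero_fill \<Omega> y j = (if j \<in> \<Omega> then y j else 0)"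

definition sqnorm :: "nat \<Rightarrow> (nat \<Rightarrow> complex) \<Rightarrow> real" where
  "sqnorm p x = (\<Sum>j<p. (cmod (x j))\<^sup>2)"

text \<open>f_Omega(x) = ||P_Omega F x||^2 / ||x||^2 (||P_Omega y||^2 = sum over Omega of |y_j|^2).\<close>
definition f_pat :: "nat \<Rightarrow> nat set \<Rightarrow> (nat \<Rightarrow> complex) \<Rightarrow> real" where
  "f_pat p \<Omega> x = (\<Sum>j\<in>\<Omega>. (cmod (dft_apply p x j))\<^sup>2) / sqnorm p x"

definition recon :: "nat \<Rightarrow> nat set \<Rightarrow> (nat \<Rightarrow> complex) \<Rightarrow> nat \<Rightarrow> complex" where
  "recon p \<Omega> x = dft_adj p (zero_fill \<Omega> (dft_apply p x))"

definition rel_err :: "nat \<Rightarrow> nat set \<Rightarrow> (nat \<Rightarrow> complex) \<Rightarrow> real" where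
  "rel_err p \<Omega> x = sqnorm p (\<lambda>j. recon p \<Omega> x j - x j) / sqnorm p x"

definition patterns :: "nat \<Rightarrow> nat \<Rightarrow> nat set set" where
  "patterns p n = {\<Omega>. \<Omega> \<subseteq> {..<p} \<and> card \<Omega> = n}"

definition eps_P :: "nat \<Rightarrow> nat \<Rightarrow> (nat \<Rightarrow> complex) measure \<Rightarrow> real" where
  "eps_P p n P = Max ((\<lambda>\<Omega>. \<integral>x. f_pat p \<Omega> x \<partial>P) ` patterns p n)"

definition emp_avg :: "nat \<Rightarrow> nat \<Rightarrow> nat set \<Rightarrow> (nat \<Rightarrow> nat \<Rightarrow> complex) \<Rightarrow> real" where
  "emp_avg p m \<Omega> xs = (1 / real m) * (\<Sum>i<m. f_pat p \<Omega> (xs i))"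

end

theory Submission
  imports Defs "HOL-Library.Real_Mod"
begin



lemma dft_sym: "dft p j k = dft p k j"
  unfolding dft_def by (simp add: mult.commute mult.left_commute)

lemma dft_orth:
  assumes "j < p" "k < p"
  shows "(\<Sum>l<p. cnj (dft p l j) * dft p l k) = (if j = k then 1 else 0)"
proof -
  define w where "w = cis (2 * pi * (real j - real k) / real p)"
  have p0: "real p > 0" using assms by simp
  have tm: "cnj (dft p l j) * dft p l k = w ^ l / of_real (real p)" for l
  proof -
    have "cnj (dft p l j) * dft p l k = cis (2 * pi * real l * real j / real p) * cis (- 2 * pi * real l * real k / real p) / (of_real (sqrt (real p)) * of_real (sqrt (real p)))"
    proof -
      have "cnj (dft p l j) = cis (2 * pi * real l * real j / real p) / of_real (sqrt (real p))"
        unfolding dft_def complex_cnj_divide complex_cnj_complex_of_real cis_cnj by (simp only: minus_divide_left mult_minus_left minus_minus)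
      then show ?thesis unfolding dft_def by (simp only: times_divide_times_eq)
    qed
    also have "of_real (sqrt (real p)) * of_real (sqrt (real p)) = (of_real (real p) :: complex)"
      by (simp del: of_real_mult add: of_real_mult[symmetric])
    also have "cis (2 * pi * real l * real j / real p) * cis (- 2 * pi * real l * real k / real p) = w ^ l"
      unfolding w_def cis_mult Complex.DeMoivre by (rule arg_cong[where f=cis]) (use p0 in \<open>simp add: field_simps\<close>)
    finally show ?thesis .
  qed
  have "(\<Sum>l<p. cnj (dft p l j) * dft p l k) = (\<Sum>l<p. w ^ l) / of_real (real p)"
    by (simp add: tm sum_divide_distrib)
  also have "\<dots> = (if j = k then 1 else 0)"
  proof (cases "j = k")
    case True
    then have "w = 1" by (simp add: w_def)
    then show ?thesis using True p0 by simp
  next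
    case False
    have wp: "w ^ p = 1"
    proof -
      have "w ^ p = cis (2 * pi * (real j - real k))"
        unfolding w_def Complex.DeMoivre using p0 by (intro arg_cong[where f=cis]) (simp add: field_simps)
      also have "\<dots> = 1"
        by (rule cis_multiple_2pi) (metis Ints_diff Ints_of_nat)
      finally show ?thesis .
    qed
    have w1: "w \<noteq> 1"
    proof
      assume "w = 1"
      then obtain n :: int where n: "2 * pi * (real j - real k) / real p = of_int n * (2 * pi)"
        unfolding w_def cis_eq_1_iff by blast
      then have "(real j - real k) * (2 * pi) = (of_int n * real p) * (2 * pi)"
        using p0 by (simp add: field_simps)
      then have e: "real j - real k = of_int n * real p"
        by (simp only: mult_cancel_right) simp
      have "\<bar>real j - real k\<bar> < real p" using assms by linarith
      then have "\<bar>of_int n\<bar> * real p < 1 * real p" using e by (simp add: abs_mult)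
      then have "\<bar>of_int n :: real\<bar> < 1" using p0 by (meson mult_less_cancel_right_pos)
      then have "n = 0" by linarith
      then show False using e False by simp
    qed
    show ?thesis using False w1 wp by (simp add: sum_gp_strict)
  qed
  finally show ?thesis .
qed

lemma sqnorm_unitary:
  assumes orth: "\<And>k l. k < p \<Longrightarrow> l < p \<Longrightarrow> (\<Sum>j<p. cnj (A j l) * A j k) = (if l = k then 1 else 0)"
  shows "sqnorm p (\<lambda>j. \<Sum>k<p. A j k * y k) = sqnorm p y"
proof -
  have "complex_of_real (sqnorm p (\<lambda>j. \<Sum>k<p. A j k * y k))
      = (\<Sum>j<p. (\<Sum>k<p. A j k * y k) * cnj (\<Sum>l<p. A j l * y l))"
    unfolding sqnorm_def of_real_sum complex_norm_square by simp
  also have "\<dots> = (\<Sum>j<p. \<Sum>k<p. \<Sum>l<p. A j k * y k * (cnj (A j l) * cnj (y l)))"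
    by (simp add: sum_distrib_left sum_distrib_right, rule sum.cong[OF refl], rule sum.swap)
  also have "\<dots> = (\<Sum>k<p. \<Sum>j<p. \<Sum>l<p. A j k * y k * (cnj (A j l) * cnj (y l)))"
    by (rule sum.swap)
  also have "\<dots> = (\<Sum>k<p. \<Sum>l<p. \<Sum>j<p. A j k * y k * (cnj (A j l) * cnj (y l)))"
    by (rule sum.cong[OF refl], rule sum.swap)
  also have "\<dots> = (\<Sum>k<p. \<Sum>l<p. y k * cnj (y l) * (\<Sum>j<p. cnj (A j l) * A j k))"
    by (simp add: sum_distrib_left mult_ac)
  also have "\<dots> = (\<Sum>k<p. \<Sum>l<p. y k * cnj (y l) * (if l = k then 1 else 0))"
    by (intro sum.cong refl) (simp add: orth)
  also have "\<dots> = (\<Sum>k<p. y k * cnj (y k))"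
    by (simp add: if_distrib cong: if_cong)
  also have "\<dots> = complex_of_real (sqnorm p y)"
    unfolding sqnorm_def of_real_sum complex_norm_square by simp
  finally show ?thesis by (simp only: of_real_eq_iff)
qed

lemma sqnorm_dft_apply: "sqnorm p (dft_apply p x) = sqnorm p x"
  unfolding dft_apply_def
  by (rule sqnorm_unitary) (simp add: dft_orth)

lemma sqnorm_dft_adj: "sqnorm p (dft_adj p y) = sqnorm p y"
proof -
  have "sqnorm p (\<lambda>j. \<Sum>k<p. cnj (dft p k j) * y k) = sqnorm p y"
  proof (rule sqnorm_unitary)
    fix k l assume "k < p" "l < p"
    have "(\<Sum>j<p. cnj (cnj (dft p l j)) * cnj (dft p k j)) = cnj (\<Sum>j<p. cnj (dft p j l) * dft p j k)"
      by (simp add: dft_sym)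
    also have "\<dots> = (if l = k then 1 else 0)" using \<open>k < p\<close> \<open>l < p\<close> by (simp add: dft_orth)
    finally show "(\<Sum>j<p. cnj (cnj (dft p l j)) * cnj (dft p k j)) = (if l = k then 1 else 0)" .
  qed
  then show ?thesis unfolding dft_adj_def .
qed

lemma dft_inv: "k < p \<Longrightarrow> dft_adj p (dft_apply p x) k = x k"
proof -
  assume k: "k < p"
  have "dft_adj p (dft_apply p x) k = (\<Sum>j<p. \<Sum>l<p. cnj (dft p j k) * dft p j l * x l)"
    by (simp add: dft_adj_def dft_apply_def sum_distrib_left mult_ac)
  also have "\<dots> = (\<Sum>l<p. \<Sum>j<p. cnj (dft p j k) * dft p j l * x l)"
    by (rule sum.swap)
  also have "\<dots> = (\<Sum>l<p. (\<Sum>j<p. cnj (dft p j k) * dft p j l) * x l)"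
    by (simp add: sum_distrib_right)
  also have "\<dots> = (\<Sum>l<p. (if k = l then 1 else 0) * x l)"
    using k by (intro sum.cong refl) (simp add: dft_orth)
  also have "\<dots> = (\<Sum>l<p. if k = l then x l else 0)"
    by (intro sum.cong refl) simp
  also have "\<dots> = x k" using k by simp
  finally show ?thesis .
qed

lemma sqnorm_cong: "(\<And>j. j < p \<Longrightarrow> x j = y j) \<Longrightarrow> sqnorm p x = sqnorm p y"
  unfolding sqnorm_def by simp

lemma rel_err_eq:
  assumes "\<Omega> \<subseteq> {..<p}"
  shows "rel_err p \<Omega> x = (if sqnorm p x = 0 then 0 else 1 - f_pat p \<Omega> x)"
proof -
  define y where "y = dft_apply p x"
  define z where "z = (\<lambda>j. zero_fill \<Omega> y j - y j)"
  have "sqnorm p (\<lambda>j. recon p \<Omega> x j - x j) = sqnorm p (dft_adj p z)"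
  proof (rule sqnorm_cong)
    fix j assume j: "j < p"
    have "recon p \<Omega> x j - x j = dft_adj p (zero_fill \<Omega> y) j - dft_adj p y j"
      using dft_inv[OF j, of x] by (simp add: recon_def y_def)
    also have "\<dots> = dft_adj p z j"
      by (simp add: dft_adj_def z_def sum_subtractf right_diff_distrib)
    finally show "recon p \<Omega> x j - x j = dft_adj p z j" .
  qed
  also have "\<dots> = sqnorm p z" by (rule sqnorm_dft_adj)
  also have "\<dots> = (\<Sum>j\<in>{..<p} - \<Omega>. (cmod (y j))\<^sup>2)"
  proof -
    have "sqnorm p z = (\<Sum>j<p. if j \<in> \<Omega> then 0 else (cmod (y j))\<^sup>2)"
      unfolding sqnorm_def z_def zero_fill_def by (intro sum.cong refl) auto
    also have "\<dots> = (\<Sum>j\<in>{..<p} - \<Omega>. (cmod (y j))\<^sup>2)"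
      by (simp add: sum.If_cases Diff_eq)
    finally show ?thesis .
  qed
  also have "\<dots> = sqnorm p y - (\<Sum>j\<in>\<Omega>. (cmod (y j))\<^sup>2)"
    using assms by (simp add: sqnorm_def sum_diff finite_subset)
  also have "sqnorm p y = sqnorm p x" by (simp add: y_def sqnorm_dft_apply)
  finally have "sqnorm p (\<lambda>j. recon p \<Omega> x j - x j) = sqnorm p x - (\<Sum>j\<in>\<Omega>. (cmod (y j))\<^sup>2)" .
  then show ?thesis
    unfolding rel_err_def f_pat_def y_def[symmetric]
    by (simp add: diff_divide_distrib)
qed

lemma f_pat_bounds:
  assumes "\<Omega> \<subseteq> {..<p}"
  shows "0 \<le> f_pat p \<Omega> x" "f_pat p \<Omega> x \<le> 1"
proof -
  have S: "(\<Sum>j\<in>\<Omega>. (cmod (dft_apply p x j))\<^sup>2) \<le> sqnorm p x"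
  proof -
    have "(\<Sum>j\<in>\<Omega>. (cmod (dft_apply p x j))\<^sup>2) \<le> sqnorm p (dft_apply p x)"
      unfolding sqnorm_def using assms by (intro sum_mono2) auto
    then show ?thesis by (simp add: sqnorm_dft_apply)
  qed
  have n0: "0 \<le> sqnorm p x" unfolding sqnorm_def by (intro sum_nonneg) auto
  show "0 \<le> f_pat p \<Omega> x" unfolding f_pat_def using n0 by (intro divide_nonneg_nonneg sum_nonneg) auto
  show "f_pat p \<Omega> x \<le> 1" unfolding f_pat_def using S n0
    by (cases "sqnorm p x = 0") (auto simp: divide_le_eq_1)
qed



lemma indep_components:
  fixes m :: nat and P :: "'a measure"
  assumes P: "prob_space P" and m: "m \<ge> 1"
  shows "prob_space.indep_vars (\<Pi>\<^sub>M i\<in>{..<m}. P) (\<lambda>_. P) (\<lambda>i xs. xs i) {..<m}"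
proof -
  let ?M = "\<Pi>\<^sub>M i\<in>{..<m}. P"
  interpret M: prob_space ?M by (rule prob_space_PiM) (simp add: P)
  define X where "X = (\<lambda>i (xs :: nat \<Rightarrow> 'a). xs (min i (m - 1)))"
  have Xm: "X i \<in> measurable ?M P" for i
    unfolding X_def using m by (intro measurable_component_singleton) simp
  have XI: "i \<in> {..<m} \<Longrightarrow> X i = (\<lambda>xs. xs i)" for i
    unfolding X_def by auto
  have "M.indep_vars (\<lambda>_. P) X {..<m}"
  proof (subst M.indep_vars_iff_distr_eq_PiM)
    show "{..<m} \<noteq> {}" using m by (auto simp: lessThan_empty_iff)
    show "X i \<in> measurable ?M P" for i by (rule Xm)
    have "distr ?M (\<Pi>\<^sub>M i\<in>{..<m}. P) (\<lambda>x. \<lambda>i\<in>{..<m}. X i x) = distr ?M ?M (\<lambda>x. x)"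
      by (rule distr_cong) (auto simp: space_PiM PiE_iff extensional_def restrict_def X_def fun_eq_iff)
    also have "\<dots> = ?M" by simp
    also have "?M = (\<Pi>\<^sub>M i\<in>{..<m}. distr ?M P (X i))"
    proof (rule PiM_cong)
      fix i assume i: "i \<in> {..<m}"
      show "P = distr ?M P (X i)"
        using distr_PiM_component[of "{..<m}" "\<lambda>_. P" i] P i by (simp add: XI)
    qed simp
    finally show "distr ?M (\<Pi>\<^sub>M i\<in>{..<m}. P) (\<lambda>x. \<lambda>i\<in>{..<m}. X i x) = (\<Pi>\<^sub>M i\<in>{..<m}. distr ?M P (X i))" .
  qed
  then show ?thesis
    by (subst M.indep_vars_cong[where Y=X and N'="\<lambda>_. P"]) (auto simp: XI)
qed

lemma hoeff_gen:
  fixes m :: nat and P :: "'a measure" and g :: "'a \<Rightarrow> real" and t :: real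
  assumes P: "prob_space P" and g: "g \<in> borel_measurable P"
    and gb0: "\<And>x. 0 \<le> g x" and gb1: "\<And>x. g x \<le> 1" and m: "m \<ge> 1" and t: "t \<ge> 0"
  shows "measure (\<Pi>\<^sub>M i\<in>{..<m}. P) {xs \<in> space (\<Pi>\<^sub>M i\<in>{..<m}. P).
            real m * (\<integral>x. g x \<partial>P) + real m * t \<le> (\<Sum>i<m. g (xs i))} \<le> exp (- 2 * real m * t\<^sup>2)"
    and "measure (\<Pi>\<^sub>M i\<in>{..<m}. P) {xs \<in> space (\<Pi>\<^sub>M i\<in>{..<m}. P).
            (\<Sum>i<m. g (xs i)) \<le> real m * (\<integral>x. g x \<partial>P) - real m * t} \<le> exp (- 2 * real m * t\<^sup>2)"
proof -
  let ?M = "\<Pi>\<^sub>M i\<in>{..<m}. P"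
  interpret M: prob_space ?M by (rule prob_space_PiM) (simp add: P)
  have ind: "M.indep_vars (\<lambda>_. borel) (\<lambda>i xs. g (xs i)) {..<m}"
    using M.indep_vars_compose2[OF indep_components[OF P m], of "\<lambda>_. g" "\<lambda>_. borel"] g by simp
  have E: "M.expectation (\<lambda>xs. g (xs i)) = (\<integral>x. g x \<partial>P)" if i: "i \<in> {..<m}" for i
  proof -
    have "(\<integral>x. g x \<partial>P) = (\<integral>x. g x \<partial>(distr ?M P (\<lambda>xs. xs i)))"
      using distr_PiM_component[of "{..<m}" "\<lambda>_. P" i] P i by simp
    also have "\<dots> = M.expectation (\<lambda>xs. g (xs i))"
      by (rule integral_distr) (use i g in auto)
    finally show ?thesis by simp
  qed
  interpret H: Hoeffding_ineq ?M "{..<m}" "\<lambda>i xs. g (xs i)" "\<lambda>_. 0" "\<lambda>_. 1" "real m * (\<integral>x. g x \<partial>P)"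
  proof unfold_locales
    show "finite {..<m}" by simp
    show "M.indep_vars (\<lambda>_. borel) (\<lambda>i xs. g (xs i)) {..<m}" by (rule ind)
    show "AE x in ?M. g (x i) \<in> {0..1}" if "i \<in> {..<m}" for i using gb0 gb1 by auto
    show "real m * (\<integral>x. g x \<partial>P) \<equiv> (\<Sum>i\<in>{..<m}. M.expectation (\<lambda>xs. g (xs i)))"
      by (simp add: E)
  qed
  have pos: "(\<Sum>i\<in>{..<m}. ((\<lambda>_. 1::real) i - (\<lambda>_. 0) i)\<^sup>2) > 0" using m by simp
  have mt: "0 \<le> real m * t" using t by simp
  have ex: "exp (- 2 * (real m * t)\<^sup>2 / (\<Sum>i\<in>{..<m}. ((\<lambda>_. 1::real) i - (\<lambda>_. 0) i)\<^sup>2)) = exp (- 2 * real m * t\<^sup>2)"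
    using m by (simp add: power2_eq_square)
  show "measure ?M {xs \<in> space ?M. real m * (\<integral>x. g x \<partial>P) + real m * t \<le> (\<Sum>i<m. g (xs i))} \<le> exp (- 2 * real m * t\<^sup>2)"
    using H.Hoeffding_ineq_ge[OF mt pos] unfolding ex by simp
  show "measure ?M {xs \<in> space ?M. (\<Sum>i<m. g (xs i)) \<le> real m * (\<integral>x. g x \<partial>P) - real m * t} \<le> exp (- 2 * real m * t\<^sup>2)"
    using H.Hoeffding_ineq_le[OF mt pos] unfolding ex by simp
qed

lemma comp_meas:
  assumes "sets P = sets (\<Pi>\<^sub>M j\<in>{..<p}. (borel :: complex measure))" and k: "k \<in> {..<p}"
  shows "(\<lambda>x. x k) \<in> borel_measurable P"
  apply (subst measurable_cong_sets[OF assms(1) refl])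
  using k by (rule measurable_component_singleton)

lemma sqnorm_meas:
  assumes "sets P = sets (\<Pi>\<^sub>M j\<in>{..<p}. (borel :: complex measure))"
  shows "sqnorm p \<in> borel_measurable P"
proof -
  have c: "(\<lambda>x. x k) \<in> borel_measurable P" if "k \<in> {..<p}" for k by (rule comp_meas[OF assms that])
  have e: "(\<lambda>x. (cmod (x k))\<^sup>2) \<in> borel_measurable P" if "k \<in> {..<p}" for k
    by (intro borel_measurable_power measurable_compose[OF c[OF that] borel_measurable_norm])
  have "(\<lambda>x. \<Sum>k<p. (cmod (x k))\<^sup>2) \<in> borel_measurable P"
    by (rule borel_measurable_sum) (rule e)
  then show ?thesis unfolding sqnorm_def[abs_def] .
qed

lemma f_pat_meas:
  assumes "sets P = sets (\<Pi>\<^sub>M j\<in>{..<p}. (borel :: complex measure))"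
  shows "f_pat p \<Omega> \<in> borel_measurable P"
proof -
  have c: "(\<lambda>x. x k) \<in> borel_measurable P" if "k \<in> {..<p}" for k by (rule comp_meas[OF assms that])
  have d: "(\<lambda>x. dft_apply p x j) \<in> borel_measurable P" for j
  proof -
    have "(\<lambda>x. \<Sum>k<p. dft p j k * x k) \<in> borel_measurable P"
    proof (rule borel_measurable_sum)
      fix k assume "k \<in> {..<p}"
      then show "(\<lambda>x. dft p j k * x k) \<in> borel_measurable P"
        by (intro borel_measurable_times borel_measurable_const c)
    qed
    then show ?thesis unfolding dft_apply_def .
  qed
  have e: "(\<lambda>x. (cmod (dft_apply p x j))\<^sup>2) \<in> borel_measurable P" for j
    by (intro borel_measurable_power measurable_compose[OF d borel_measurable_norm])
  have s: "(\<lambda>x. \<Sum>j\<in>\<Omega>. (cmod (dft_apply p x j))\<^sup>2) \<in> borel_measurable P"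
    by (rule borel_measurable_sum) (rule e)
  have "(\<lambda>x. (\<Sum>j\<in>\<Omega>. (cmod (dft_apply p x j))\<^sup>2) / sqnorm p x) \<in> borel_measurable P"
    by (rule borel_measurable_divide[OF s sqnorm_meas[OF assms]])
  then show ?thesis unfolding f_pat_def[abs_def] .
qed

lemma exp_rel_err:
  assumes P: "prob_space P"
    and sP: "sets P = sets (\<Pi>\<^sub>M j\<in>{..<p}. (borel :: complex measure))"
    and Z: "measure P {x \<in> space P. \<forall>j<p. x j = 0} = 0"
    and \<Omega>: "\<Omega> \<subseteq> {..<p}"
  shows "(\<integral>x. rel_err p \<Omega> x \<partial>P) = 1 - (\<integral>x. f_pat p \<Omega> x \<partial>P)"
proof -
  interpret P: prob_space P by (rule P)
  have fm: "f_pat p \<Omega> \<in> borel_measurable P" by (rule f_pat_meas[OF sP])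
  have sm: "sqnorm p \<in> borel_measurable P" by (rule sqnorm_meas[OF sP])
  have ZZ: "{x \<in> space P. sqnorm p x = 0} = {x \<in> space P. \<forall>j<p. x j = 0}"
  proof -
    have "sqnorm p x = 0 \<longleftrightarrow> (\<forall>j<p. x j = 0)" for x
      unfolding sqnorm_def by (subst sum_nonneg_eq_0_iff) auto
    then show ?thesis by blast
  qed
  have mZ: "{x \<in> space P. sqnorm p x = 0} \<in> sets P"
  proof -
    have "{x \<in> space P. sqnorm p x = 0} = sqnorm p -` {0} \<inter> space P" by auto
    also have "\<dots> \<in> sets P" by (rule measurable_sets[OF sm]) simp
    finally show ?thesis .
  qed
  have null: "{x \<in> space P. sqnorm p x = 0} \<in> null_sets P"
  proof (rule null_setsI[OF _ mZ])
    have "measure P {x \<in> space P. sqnorm p x = 0} = 0" using Z by (simp only: ZZ)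
    then show "emeasure P {x \<in> space P. sqnorm p x = 0} = 0"
      by (simp only: P.emeasure_eq_measure ennreal_0)
  qed
  have AE: "AE x in P. sqnorm p x \<noteq> 0" by (rule AE_I'[OF null]) auto
  have fint: "integrable P (f_pat p \<Omega>)"
  proof (rule P.integrable_const_bound[where B=1])
    show "AE x in P. norm (f_pat p \<Omega> x) \<le> 1"
      by (rule AE_I2) (simp add: f_pat_bounds[OF \<Omega>])
    show "f_pat p \<Omega> \<in> borel_measurable P" by (rule fm)
  qed
  have dm: "(\<lambda>x. 1 - f_pat p \<Omega> x) \<in> borel_measurable P"
    by (rule borel_measurable_diff[OF borel_measurable_const fm])
  have im: "(\<lambda>x. if sqnorm p x = 0 then 0 else 1 - f_pat p \<Omega> x) \<in> borel_measurable P"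
    by (rule measurable_If[OF borel_measurable_const dm mZ])
  have AE2: "AE x in P. (if sqnorm p x = 0 then 0 else 1 - f_pat p \<Omega> x) = 1 - f_pat p \<Omega> x"
    by (rule AE_mp[OF AE], rule AE_I2) simp
  have "(\<integral>x. rel_err p \<Omega> x \<partial>P) = (\<integral>x. (if sqnorm p x = 0 then 0 else 1 - f_pat p \<Omega> x) \<partial>P)"
    by (simp only: rel_err_eq[OF \<Omega>])
  also have "\<dots> = (\<integral>x. 1 - f_pat p \<Omega> x \<partial>P)"
    by (rule integral_cong_AE[OF im dm AE2])
  also have "\<dots> = (\<integral>x. 1 \<partial>P) - (\<integral>x. f_pat p \<Omega> x \<partial>P)"
    by (rule Bochner_Integration.integral_diff[OF P.integrable_const fint])
  also have "(\<integral>x. 1 \<partial>P) = (1::real)" by (simp add: P.prob_space)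
  finally show ?thesis .
qed



theorem proposition1:
  fixes p n m :: nat and \<beta> :: real
    and P :: "(nat \<Rightarrow> complex) measure"
    and \<Omega>m :: "(nat \<Rightarrow> nat \<Rightarrow> complex) \<Rightarrow> nat set"
  assumes "p \<ge> 1" and "1 \<le> n" and "n \<le> p" and "m \<ge> 1"
    and "0 < \<beta>" and "\<beta> < 1"
    and "prob_space P"
    and "sets P = sets (\<Pi>\<^sub>M j\<in>{..<p}. (borel :: complex measure))"
    and "measure P {x \<in> space P. \<forall>j<p. x j = 0} = 0"
    and "\<forall>xs \<in> space (\<Pi>\<^sub>M i\<in>{..<m}. P). \<Omega>m xs \<in> patterns p n"
    and "\<forall>xs \<in> space (\<Pi>\<^sub>M i\<in>{..<m}. P). \<forall>\<Omega> \<in> patterns p n.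
           emp_avg p m \<Omega> xs \<le> emp_avg p m (\<Omega>m xs) xs"
  shows "\<exists>E \<in> sets (\<Pi>\<^sub>M i\<in>{..<m}. P).
           measure (\<Pi>\<^sub>M i\<in>{..<m}. P) E \<ge> 1 - \<beta> \<and>
           (\<forall>xs \<in> E. (\<integral>x. rel_err p (\<Omega>m xs) x \<partial>P)
              \<le> 1 - eps_P p n P
                + sqrt (2 / real m * (ln (real (p choose n)) + ln (2 / \<beta>))))"
proof -
  note hp = assms(1) and hn = assms(2) and hnp = assms(3) and hm = assms(4)
    and hb0 = assms(5) and hb1 = assms(6) and PP = assms(7) and sP = assms(8)
    and Z = assms(9) and Om = assms(10) and Omax = assms(11)
  let ?M = "\<Pi>\<^sub>M i\<in>{..<m}. P"
  interpret P: prob_space P by (rule PP)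
  interpret M: prob_space ?M by (rule prob_space_PiM) (simp add: PP)
  define Pat where "Pat = patterns p n"
  define Ef where "Ef = (\<lambda>\<Omega>. \<integral>x. f_pat p \<Omega> x \<partial>P)"
  define N where "N = real (p choose n)"
  define L where "L = ln N + ln (2 / \<beta>)"
  define em where "em = sqrt (2 / real m * L)"
  define t where "t = em / 2"
  have finPat: "finite Pat" unfolding Pat_def patterns_def
    by (rule finite_subset[of _ "Pow {..<p}"]) auto
  have cardPat: "card Pat = p choose n" unfolding Pat_def patterns_def
    using n_subsets[of "{..<p}" n] by simp
  have nePat: "Pat \<noteq> {}"
  proof -
    have "{..<n} \<in> Pat" unfolding Pat_def patterns_def using hnp by auto
    then show ?thesis by blast
  qed
  have PatSub: "\<Omega> \<subseteq> {..<p}" if "\<Omega> \<in> Pat" for \<Omega> using that unfolding Pat_def patterns_def by auto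
  have N1: "N \<ge> 1" unfolding N_def using zero_less_binomial[OF hnp] by (simp add: Suc_leI)
  have L0: "L \<ge> 0" unfolding L_def using N1 hb0 hb1 by (intro add_nonneg_nonneg) auto
  have t0: "t \<ge> 0" unfolding t_def em_def using L0 by simp
  have mpos: "real m > 0" using hm by simp
  have tsq: "2 * real m * t\<^sup>2 = L"
  proof -
    have "t\<^sup>2 = (2 / real m * L) / 4" unfolding t_def em_def
      using L0 mpos by (simp add: power_divide)
    then show ?thesis using mpos by (simp add: field_simps)
  qed
  have expL: "exp (- 2 * real m * t\<^sup>2) = \<beta> / (2 * N)"
  proof -
    have "exp (- 2 * real m * t\<^sup>2) = exp (- L)" using tsq by (simp add: algebra_simps)
    also have "\<dots> = exp (- ln N) * exp (- ln (2 / \<beta>))" unfolding L_def by (simp add: exp_add[symmetric])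
    also have "\<dots> = (1 / N) * (\<beta> / 2)" using N1 hb0 by (simp add: exp_minus field_simps)
    finally show ?thesis by simp
  qed
  obtain \<Omega>s where \<Omega>s: "\<Omega>s \<in> Pat" "Ef \<Omega>s = eps_P p n P"
  proof -
    have "eps_P p n P \<in> Ef ` Pat" unfolding eps_P_def Ef_def Pat_def
      using finPat nePat unfolding Pat_def by (intro Max_in) auto
    then show ?thesis using that by (metis imageE)
  qed
  define S where "S = (\<lambda>\<Omega> (xs :: nat \<Rightarrow> nat \<Rightarrow> complex). \<Sum>i<m. f_pat p \<Omega> (xs i))"
  have Smeas[measurable]: "S \<Omega> \<in> borel_measurable ?M" for \<Omega>
  proof -
    have [measurable]: "f_pat p \<Omega> \<in> borel_measurable P" by (rule f_pat_meas[OF sP])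
    show ?thesis unfolding S_def by measurable
  qed
  define B where "B = (\<lambda>\<Omega>. {xs \<in> space ?M. real m * Ef \<Omega> + real m * t \<le> S \<Omega> xs})"
  define B0 where "B0 = {xs \<in> space ?M. S \<Omega>s xs \<le> real m * Ef \<Omega>s - real m * t}"
  have Bm: "B \<Omega> \<in> sets ?M" for \<Omega> unfolding B_def by measurable
  have B0m: "B0 \<in> sets ?M" unfolding B0_def by measurable
  have Bp: "measure ?M (B \<Omega>) \<le> \<beta> / (2 * N)" if "\<Omega> \<in> Pat" for \<Omega>
    unfolding B_def S_def Ef_def expL[symmetric]
    by (rule hoeff_gen(1)[OF PP f_pat_meas[OF sP] f_pat_bounds[OF PatSub[OF that]] hm t0])
  have B0p: "measure ?M B0 \<le> \<beta> / (2 * N)"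
    unfolding B0_def S_def Ef_def expL[symmetric]
    by (rule hoeff_gen(2)[OF PP f_pat_meas[OF sP] f_pat_bounds[OF PatSub[OF \<Omega>s(1)]] hm t0])
  define Bad where "Bad = B0 \<union> (\<Union>\<Omega>\<in>Pat. B \<Omega>)"
  have Badm: "Bad \<in> sets ?M" unfolding Bad_def using Bm B0m finPat by blast
  have "measure ?M Bad \<le> measure ?M B0 + measure ?M (\<Union>\<Omega>\<in>Pat. B \<Omega>)"
    unfolding Bad_def using Bm B0m finPat by (intro measure_Un_le) auto
  also have "measure ?M (\<Union>\<Omega>\<in>Pat. B \<Omega>) \<le> (\<Sum>\<Omega>\<in>Pat. measure ?M (B \<Omega>))"
    using Bm finPat by (intro M.finite_measure_subadditive_finite) auto
  also have "\<dots> \<le> (\<Sum>\<Omega>\<in>Pat. \<beta> / (2 * N))" by (intro sum_mono Bp)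
  also have "\<dots> = N * (\<beta> / (2 * N))" using cardPat by (simp add: N_def)
  finally have "measure ?M Bad \<le> \<beta> / (2 * N) + N * (\<beta> / (2 * N))" using B0p by linarith
  also have "\<dots> \<le> \<beta>"
  proof -
    have "\<beta> / (2 * N) \<le> \<beta> / 2" using N1 hb0 by (intro divide_left_mono) auto
    moreover have "N * (\<beta> / (2 * N)) = \<beta> / 2" using N1 by simp
    ultimately show ?thesis by linarith
  qed
  finally have badp: "measure ?M Bad \<le> \<beta>" .
  define E where "E = space ?M - Bad"
  have Em: "E \<in> sets ?M" unfolding E_def using Badm by blast
  have "measure ?M E = 1 - measure ?M Bad" unfolding E_def by (rule M.prob_compl[OF Badm])
  then have Ep: "measure ?M E \<ge> 1 - \<beta>" using badp by linarith
  have good: "(\<integral>x. rel_err p (\<Omega>m xs) x \<partial>P) \<le> 1 - eps_P p n P + em" if xs: "xs \<in> E" for xs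
  proof -
    have sp: "xs \<in> space ?M" using xs unfolding E_def by blast
    have OmP: "\<Omega>m xs \<in> Pat" using Om sp unfolding Pat_def by blast
    have nb: "xs \<notin> B (\<Omega>m xs)" using xs OmP unfolding E_def Bad_def by blast
    have nb0: "xs \<notin> B0" using xs unfolding E_def Bad_def by blast
    have s1: "S (\<Omega>m xs) xs < real m * Ef (\<Omega>m xs) + real m * t" using nb sp unfolding B_def by auto
    have s2: "real m * Ef \<Omega>s - real m * t < S \<Omega>s xs" using nb0 sp unfolding B0_def by auto
    have "emp_avg p m \<Omega>s xs \<le> emp_avg p m (\<Omega>m xs) xs" using Omax sp \<Omega>s(1) unfolding Pat_def by blast
    then have s3: "S \<Omega>s xs \<le> S (\<Omega>m xs) xs" unfolding emp_avg_def S_def using mpos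
      by (simp add: divide_le_cancel)
    have "real m * (Ef \<Omega>s - 2 * t) < real m * Ef (\<Omega>m xs)" using s1 s2 s3 by (simp add: algebra_simps)
    then have "Ef \<Omega>s - 2 * t < Ef (\<Omega>m xs)" using mpos by (simp only: mult_less_cancel_left_pos)
    moreover have "(\<integral>x. rel_err p (\<Omega>m xs) x \<partial>P) = 1 - Ef (\<Omega>m xs)"
      unfolding Ef_def by (rule exp_rel_err[OF PP sP Z PatSub[OF OmP]])
    ultimately show ?thesis using \<Omega>s(2) unfolding t_def by linarith
  qed
  show ?thesis
    using Em Ep good unfolding em_def L_def N_def by blast
qed

end
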